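(* Let $V$ be a finite set with positive element weights ($\vert A \vert$ = total weight of $A \subseteq V$), and let $\mathcal{P}, \mathcal{P}'$ be partitions of $V$ into nonempty parts. If an optimal $C_{\mathcal{P}}$-correspondence $(\mathcal{S}, \mathcal{S}')$ is not mutual, then $\vert \mathcal{S} \vert \in \{1, \vert \mathcal{P} \vert - 1\}$ or $\vert \mathcal{S}' \vert \in \{1, \vert \mathcal{P}' \vert - 1\}$.
   Context: For $\mathcal{S}$ a set of subsets of $V$, $U_{\mathcal{S}}$ is their union. A correspondence is a pair $(\mathcal{S}, \mathcal{S}')$ with $\mathcal{S} \subseteq \mathcal{P}$, $\mathcal{S}' \subseteq \mathcal{P}'$, with cost $\vert U_{\mathcal{S}} \triangle U_{\mathcal{S}'} \vert$. A $C_{\mathcal{P}}$-correspondence is one with $\mathcal{S} \notin \{\emptyset, \mathcal{P}\}$; it is optimal if its cost is minimum among all $C_{\mathcal{P}}$-correspondences. A correspondence is mutual if (1) $\vert P \cap U_{\mathcal{S}'} \vert \ge \vert P \vert/2$ for all $P \in \mathcal{S}$, (2) $\vert P \cap U_{\mathcal{S}'} \vert \le \vert P \vert/2$ for all $P \in \mathcal{P} \setminus \mathcal{S}$, (3) $\vert P' \cap U_{\mathcal{S}} \vert \ge \vert P' \vert/2$ for all $P' \in \mathcal{S}'$, and (4) $\vert P' \cap U_{\mathcal{S}} \vert \le \vert P' \vert/2$ for all $P' \in \mathcal{P}' \setminus \mathcal{S}'$. *)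

theory Defs
  imports Complex_Main
begin

definition wt :: "('a \<Rightarrow> real) \<Rightarrow> 'a set \<Rightarrow> real" where
  "wt w A = (\<Sum>x\<in>A. w x)"

definition is_partition :: "'a set \<Rightarrow> 'a set set \<Rightarrow> bool" where
  "is_partition V P \<longleftrightarrow> \<Union>P = V \<and> {} \<notin> P \<and>
     (\<forall>A\<in>P. \<forall>B\<in>P. A \<noteq> B \<longrightarrow> A \<inter> B = {})"

definition corr_cost :: "('a \<Rightarrow> real) \<Rightarrow> 'a set set \<Rightarrow> 'a set set \<Rightarrow> real" where
  "corr_cost w S S' = wt w ((\<Union>S - \<Union>S') \<union> (\<Union>S' - \<Union>S))"

definition is_CP_corr :: "'a set set \<Rightarrow> 'a set set \<Rightarrow> 'a set set \<Rightarrow> 'a set set \<Rightarrow> bool" where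
  "is_CP_corr P P' S S' \<longleftrightarrow> S \<subseteq> P \<and> S' \<subseteq> P' \<and> S \<noteq> {} \<and> S \<noteq> P"

definition optimal_CP_corr ::
  "('a \<Rightarrow> real) \<Rightarrow> 'a set set \<Rightarrow> 'a set set \<Rightarrow> 'a set set \<Rightarrow> 'a set set \<Rightarrow> bool" where
  "optimal_CP_corr w P P' S S' \<longleftrightarrow> is_CP_corr P P' S S' \<and>
     (\<forall>T T'. is_CP_corr P P' T T' \<longrightarrow> corr_cost w S S' \<le> corr_cost w T T')"

definition mutual ::
  "('a \<Rightarrow> real) \<Rightarrow> 'a set set \<Rightarrow> 'a set set \<Rightarrow> 'a set set \<Rightarrow> 'a set set \<Rightarrow> bool" where
  "mutual w P P' S S' \<longleftrightarrow>
     (\<forall>A\<in>S. wt w (A \<inter> \<Union>S') \<ge> wt w A / 2) \<and>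
     (\<forall>A\<in>P - S. wt w (A \<inter> \<Union>S') \<le> wt w A / 2) \<and>
     (\<forall>B\<in>S'. wt w (B \<inter> \<Union>S) \<ge> wt w B / 2) \<and>
     (\<forall>B\<in>P' - S'. wt w (B \<inter> \<Union>S) \<le> wt w B / 2)"

end

theory Submission
  imports Defs
begin

lemma wt_un: "finite A \<Longrightarrow> finite B \<Longrightarrow> A \<inter> B = {} \<Longrightarrow> wt w (A \<union> B) = wt w A + wt w B"
  unfolding wt_def by (simp add: sum.union_disjoint)

lemma wt_split: "finite A \<Longrightarrow> wt w A = wt w (A \<inter> X) + wt w (A - X)"
proof -
  assume f: "finite A"
  have "A = (A \<inter> X) \<union> (A - X)" by blast
  hence "wt w A = wt w ((A \<inter> X) \<union> (A - X))" by simp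
  also have "\<dots> = wt w (A \<inter> X) + wt w (A - X)" by (rule wt_un) (use f in auto)
  finally show ?thesis .
qed

lemma add_cost:
  assumes "finite V" "U \<subseteq> V" "U' \<subseteq> V" "A \<subseteq> V" "A \<inter> U = {}"
  shows "wt w (((U \<union> A) - U') \<union> (U' - (U \<union> A))) =
         wt w ((U - U') \<union> (U' - U)) + wt w (A - U') - wt w (A \<inter> U')"
proof -
  let ?D = "(U - U') \<union> (U' - U)"
  have fin: "finite X" if "X \<subseteq> V" for X using assms(1) that finite_subset by blast
  have e1: "((U \<union> A) - U') \<union> (U' - (U \<union> A)) = (?D - A) \<union> (A - U')" using assms by blast
  have e2: "?D = (?D - A) \<union> (A \<inter> U')" using assms by blast
  have "wt w (((U \<union> A) - U') \<union> (U' - (U \<union> A))) = wt w (?D - A) + wt w (A - U')"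
    unfolding e1 by (rule wt_un) (use assms fin in auto)
  moreover have "wt w ?D = wt w (?D - A) + wt w (A \<inter> U')"
    by (subst e2, rule wt_un) (use assms fin in auto)
  ultimately show ?thesis by linarith
qed

lemma rem_cost:
  assumes "finite V" "U \<subseteq> V" "U' \<subseteq> V" "A \<subseteq> U"
  shows "wt w (((U - A) - U') \<union> (U' - (U - A))) =
         wt w ((U - U') \<union> (U' - U)) - wt w (A - U') + wt w (A \<inter> U')"
proof -
  have "wt w ((((U - A) \<union> A) - U') \<union> (U' - ((U - A) \<union> A))) =
         wt w (((U - A) - U') \<union> (U' - (U - A))) + wt w (A - U') - wt w (A \<inter> U')"
    by (rule add_cost[of V "U - A" U' A]) (use assms in auto)
  moreover have "(U - A) \<union> A = U" using assms by blast
  ultimately show ?thesis by simp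
qed

lemma rem_cost':
  assumes "finite V" "U \<subseteq> V" "U' \<subseteq> V" "A \<subseteq> U"
  shows "wt w ((U' - (U - A)) \<union> ((U - A) - U')) =
         wt w ((U' - U) \<union> (U - U')) - wt w (A - U') + wt w (A \<inter> U')"
proof -
  have a: "(U' - (U - A)) \<union> ((U - A) - U') = ((U - A) - U') \<union> (U' - (U - A))" by blast
  have b: "(U' - U) \<union> (U - U') = (U - U') \<union> (U' - U)" by blast
  show ?thesis unfolding a b by (rule rem_cost[OF assms])
qed

lemma add_cost':
  assumes "finite V" "U \<subseteq> V" "U' \<subseteq> V" "A \<subseteq> V" "A \<inter> U = {}"
  shows "wt w ((U' - (U \<union> A)) \<union> ((U \<union> A) - U')) =
         wt w ((U' - U) \<union> (U - U')) + wt w (A - U') - wt w (A \<inter> U')"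
proof -
  have a: "(U' - (U \<union> A)) \<union> ((U \<union> A) - U') = ((U \<union> A) - U') \<union> (U' - (U \<union> A))" by blast
  have b: "(U' - U) \<union> (U - U') = (U - U') \<union> (U' - U)" by blast
  show ?thesis unfolding a b by (rule add_cost[OF assms])
qed

lemma sd_comm: "(X - Y) \<union> (Y - X) = (Y - X) \<union> (X - Y)" by blast

lemma Union_insert_disj:
  assumes "is_partition V P" "S \<subseteq> P" "A \<in> P - S"
  shows "A \<inter> \<Union>S = {}"
proof -
  have d: "\<And>B. B \<in> P \<Longrightarrow> A \<noteq> B \<Longrightarrow> A \<inter> B = {}"
    using assms(1,3) unfolding is_partition_def by auto
  show ?thesis
  proof (rule equals0I)
    fix x assume "x \<in> A \<inter> \<Union>S"
    then obtain B where B: "B \<in> S" "x \<in> A" "x \<in> B" by auto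
    have "A \<noteq> B" using B assms(3) by auto
    thus False using d[of B] B assms(2) by auto
  qed
qed

lemma Union_remove:
  assumes "is_partition V P" "S \<subseteq> P" "A \<in> S"
  shows "\<Union>(S - {A}) = \<Union>S - A"
proof -
  have d: "\<And>B. B \<in> S \<Longrightarrow> A \<noteq> B \<Longrightarrow> A \<inter> B = {}"
    using assms unfolding is_partition_def by auto
  show ?thesis
  proof
    show "\<Union>(S - {A}) \<subseteq> \<Union>S - A"
    proof
      fix x assume "x \<in> \<Union>(S - {A})"
      then obtain B where B: "B \<in> S" "B \<noteq> A" "x \<in> B" by auto
      thus "x \<in> \<Union>S - A" using d[of B] by auto
    qed
  qed auto
qed

theorem proposition11:
  fixes V :: "'a set" and w :: "'a \<Rightarrow> real" and P P' S S' :: "'a set set"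
  assumes "finite V"
    and "\<forall>x\<in>V. w x > 0"
    and "is_partition V P"
    and "is_partition V P'"
    and "optimal_CP_corr w P P' S S'"
    and "\<not> mutual w P P' S S'"
  shows "card S \<in> {1, card P - 1} \<or> card S' \<in> {1, card P' - 1}"
proof (rule ccontr)
  assume nc: "\<not> ?thesis"
  have SP: "S \<subseteq> P" "S' \<subseteq> P'" "S \<noteq> {}" "S \<noteq> P" using assms(5)
    unfolding optimal_CP_corr_def is_CP_corr_def by auto
  have opt: "\<And>T T'. is_CP_corr P P' T T' \<Longrightarrow> corr_cost w S S' \<le> corr_cost w T T'"
    using assms(5) unfolding optimal_CP_corr_def by auto
  have "P \<subseteq> Pow V" using assms(3) unfolding is_partition_def by blast
  hence finP: "finite P" using assms(1) finite_subset by blast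
  have sub: "A \<subseteq> V" if "A \<in> P" for A using assms(3) that unfolding is_partition_def by blast
  have sub': "A \<subseteq> V" if "A \<in> P'" for A using assms(4) that unfolding is_partition_def by blast
  have finA: "finite A" if "A \<subseteq> V" for A using assms(1) that finite_subset by blast
  have U: "\<Union>S \<subseteq> V" using SP sub by blast
  have U': "\<Union>S' \<subseteq> V" using SP sub' by blast
  let ?U = "\<Union>S" and ?U' = "\<Union>S'"
  have c1: "wt w (A \<inter> ?U') \<ge> wt w A / 2" if "A \<in> S" for A
  proof (rule ccontr)
    assume h: "\<not> ?thesis"
    have "S - {A} \<noteq> {}"
    proof
      assume "S - {A} = {}"
      hence "S = {A}" using that by blast
      thus False using nc by simp
    qed
    hence "is_CP_corr P P' (S - {A}) S'" using SP that unfolding is_CP_corr_def by auto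
    hence "corr_cost w S S' \<le> corr_cost w (S - {A}) S'" by (rule opt)
    moreover have "corr_cost w (S - {A}) S' = corr_cost w S S' - wt w (A - ?U') + wt w (A \<inter> ?U')"
      unfolding corr_cost_def Union_remove[OF assms(3) SP(1) that]
      by (rule rem_cost[OF assms(1) U U']) (use that in auto)
    moreover have "wt w A = wt w (A \<inter> ?U') + wt w (A - ?U')"
      using wt_split[OF finA[OF sub], of A] SP that by blast
    ultimately show False using h by linarith
  qed
  have c2: "wt w (A \<inter> ?U') \<le> wt w A / 2" if "A \<in> P - S" for A
  proof (rule ccontr)
    assume h: "\<not> ?thesis"
    have "insert A S \<noteq> P"
    proof
      assume "insert A S = P"
      hence "card P = card S + 1" using that finP SP
        by (metis DiffD2 card_insert_disjoint finite_subset Suc_eq_plus1)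
      thus False using nc by simp
    qed
    hence "is_CP_corr P P' (insert A S) S'" using SP that unfolding is_CP_corr_def by auto
    hence "corr_cost w S S' \<le> corr_cost w (insert A S) S'" by (rule opt)
    moreover have "corr_cost w (insert A S) S' = corr_cost w S S' + wt w (A - ?U') - wt w (A \<inter> ?U')"
      unfolding corr_cost_def Union_insert Un_commute[of A]
      by (rule add_cost[OF assms(1) U U']) (use that sub Union_insert_disj[OF assms(3) SP(1) that] in auto)
    moreover have "wt w A = wt w (A \<inter> ?U') + wt w (A - ?U')"
      using wt_split[OF finA[OF sub[of A]]] that by blast
    ultimately show False using h by linarith
  qed
  have c3: "wt w (B \<inter> ?U) \<ge> wt w B / 2" if "B \<in> S'" for B
  proof (rule ccontr)
    assume h: "\<not> ?thesis"
    have "is_CP_corr P P' S (S' - {B})" using SP unfolding is_CP_corr_def by auto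
    hence "corr_cost w S S' \<le> corr_cost w S (S' - {B})" by (rule opt)
    moreover have "corr_cost w S (S' - {B}) = corr_cost w S S' - wt w (B - ?U) + wt w (B \<inter> ?U)"
    proof -
      have Bs: "B \<subseteq> ?U'" using that by blast
      show ?thesis
        unfolding corr_cost_def Union_remove[OF assms(4) SP(2) that]
        using rem_cost'[OF assms(1) U' U Bs, of w] .
    qed
    moreover have "wt w B = wt w (B \<inter> ?U) + wt w (B - ?U)"
      using wt_split[OF finA[OF sub'[of B]]] SP that by blast
    ultimately show False using h by linarith
  qed
  have c4: "wt w (B \<inter> ?U) \<le> wt w B / 2" if "B \<in> P' - S'" for B
  proof (rule ccontr)
    assume h: "\<not> ?thesis"
    have "is_CP_corr P P' S (insert B S')" using SP that unfolding is_CP_corr_def by auto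
    hence "corr_cost w S S' \<le> corr_cost w S (insert B S')" by (rule opt)
    moreover have "corr_cost w S (insert B S') = corr_cost w S S' + wt w (B - ?U) - wt w (B \<inter> ?U)"
    proof -
      have Bs: "B \<subseteq> V" using that sub' by blast
      show ?thesis
        unfolding corr_cost_def Union_insert Un_commute[of B]
        using add_cost'[OF assms(1) U' U Bs Union_insert_disj[OF assms(4) SP(2) that], of w] .
    qed
    moreover have "wt w B = wt w (B \<inter> ?U) + wt w (B - ?U)"
      using wt_split[OF finA[OF sub'[of B]]] that by blast
    ultimately show False using h by linarith
  qed
  have "mutual w P P' S S'" unfolding mutual_def using c1 c2 c3 c4 by blast
  thus False using assms(6) by simp
qed

end
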